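(* Let $A$ be a $p$-Zariskian ring (not necessarily Noetherian) with Jacobson radical $\mathrm{Jac}(A)$. If $A$ has a $\delta$-structure $\delta$, then $\delta(x)\in\mathrm{Jac}(A)$ for every $x\in\mathrm{Jac}(A)^2$. In particular, no distinguished element of $A$ belongs to $\mathrm{Jac}(A)^2$. If the $\delta$-ring $A$ is local with maximal ideal $\mathfrak{m}$, then $A$ is unramified, i.e. $p\in\mathfrak{m}\setminus\mathfrak{m}^2$.
   Context: All rings are commutative $\mathbb{Z}_{(p)}$-algebras. A ring is $p$-Zariskian if $p\in\mathrm{Jac}(A)$. A $\delta$-structure is a map $\delta:A\to A$ with $\delta(0)=\delta(1)=0$, $\delta(a+b)=\delta(a)+\delta(b)+\frac{a^p+b^p-(a+b)^p}{p}$, $\delta(ab)=a^p\delta(b)+b^p\delta(a)+p\delta(a)\delta(b)$. An element $d$ is distinguished if $\delta(d)$ is a unit. *)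

theory Defs
  imports Main "HOL-Computational_Algebra.Primes"
begin

definition is_ideal :: "'a::comm_ring_1 set \<Rightarrow> bool" where
  "is_ideal I \<longleftrightarrow> 0 \<in> I \<and> (\<forall>x\<in>I. \<forall>y\<in>I. x + y \<in> I) \<and> (\<forall>x\<in>I. \<forall>r. r * x \<in> I)"

definition maximal_ideal :: "'a::comm_ring_1 set \<Rightarrow> bool" where
  "maximal_ideal M \<longleftrightarrow> is_ideal M \<and> M \<noteq> UNIV \<and>
     (\<forall>J. is_ideal J \<and> M \<subseteq> J \<longrightarrow> J = M \<or> J = UNIV)"

definition jacobson_radical :: "'a::comm_ring_1 set" where
  "jacobson_radical = \<Inter>{M. maximal_ideal M}"

definition ideal_prod :: "'a::comm_ring_1 set \<Rightarrow> 'a set \<Rightarrow> 'a set" where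
  "ideal_prod I J = \<Inter>{K. is_ideal K \<and> {x * y | x y. x \<in> I \<and> y \<in> J} \<subseteq> K}"

definition Zp_algebra :: "nat \<Rightarrow> 'a::comm_ring_1 itself \<Rightarrow> bool" where
  "Zp_algebra p _ \<longleftrightarrow> (\<forall>n::nat. \<not> p dvd n \<longrightarrow> (of_nat n :: 'a) dvd 1)"

definition p_zariskian :: "nat \<Rightarrow> 'a::comm_ring_1 itself \<Rightarrow> bool" where
  "p_zariskian p _ \<longleftrightarrow> (of_nat p :: 'a) \<in> jacobson_radical"

text \<open>The integer polynomial (a^p + b^p - (a+b)^p)/p, i.e.
  minus the sum over 0<i<p of (binom p i / p) a^i b^(p-i).\<close>
definition delta_cross :: "nat \<Rightarrow> 'a::comm_ring_1 \<Rightarrow> 'a \<Rightarrow> 'a" where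
  "delta_cross p a b = - (\<Sum>i\<in>{1..p-1}. of_nat ((p choose i) div p) * a ^ i * b ^ (p - i))"

definition is_delta_structure :: "nat \<Rightarrow> ('a::comm_ring_1 \<Rightarrow> 'a) \<Rightarrow> bool" where
  "is_delta_structure p \<delta> \<longleftrightarrow> \<delta> 0 = 0 \<and> \<delta> 1 = 0 \<and>
     (\<forall>a b. \<delta> (a + b) = \<delta> a + \<delta> b + delta_cross p a b) \<and>
     (\<forall>a b. \<delta> (a * b) = a ^ p * \<delta> b + b ^ p * \<delta> a + of_nat p * \<delta> a * \<delta> b)"

definition distinguished :: "('a::comm_ring_1 \<Rightarrow> 'a) \<Rightarrow> 'a \<Rightarrow> bool" where
  "distinguished \<delta> d \<longleftrightarrow> \<delta> d dvd 1"

end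

theory Submission
  imports Defs
begin

lemma ideal_Inter: "\<forall>I\<in>S. is_ideal I \<Longrightarrow> is_ideal (\<Inter>S)"
  unfolding is_ideal_def by blast

lemma maximal_is_ideal: "maximal_ideal M \<Longrightarrow> is_ideal M"
  unfolding maximal_ideal_def by blast

lemma jac_ideal: "is_ideal (jacobson_radical :: 'a::comm_ring_1 set)"
  unfolding jacobson_radical_def by (rule ideal_Inter) (auto dest: maximal_is_ideal)

lemma ideal_mult_left: "is_ideal I \<Longrightarrow> x \<in> I \<Longrightarrow> r * x \<in> I"
  unfolding is_ideal_def by blast
lemma ideal_mult_right: "is_ideal I \<Longrightarrow> x \<in> I \<Longrightarrow> x * r \<in> I"
  unfolding is_ideal_def by (metis mult.commute)
lemma ideal_add: "is_ideal I \<Longrightarrow> x \<in> I \<Longrightarrow> y \<in> I \<Longrightarrow> x + y \<in> I"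
  unfolding is_ideal_def by blast
lemma ideal_zero: "is_ideal I \<Longrightarrow> 0 \<in> I"
  unfolding is_ideal_def by blast
lemma ideal_neg: "is_ideal I \<Longrightarrow> x \<in> I \<Longrightarrow> - x \<in> I"
  using ideal_mult_left[of I x "-1"] by simp
lemma ideal_diff: "is_ideal I \<Longrightarrow> x \<in> I \<Longrightarrow> y \<in> I \<Longrightarrow> x - y \<in> I"
  using ideal_add[of I x "-y"] ideal_neg[of I y] by simp
lemma ideal_sum: "is_ideal I \<Longrightarrow> (\<And>i. i \<in> S \<Longrightarrow> f i \<in> I) \<Longrightarrow> sum f S \<in> I"
  by (induction S rule: infinite_finite_induct) (auto simp: ideal_zero ideal_add)
lemma ideal_power: "is_ideal I \<Longrightarrow> x \<in> I \<Longrightarrow> n \<ge> 1 \<Longrightarrow> x ^ n \<in> I"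
  by (cases n) (auto intro: ideal_mult_right)
lemma ideal_unit: "is_ideal I \<Longrightarrow> u \<in> I \<Longrightarrow> u dvd 1 \<Longrightarrow> 1 \<in> I"
  by (metis dvd_def ideal_mult_right)
lemma ideal_one: "is_ideal I \<Longrightarrow> 1 \<in> I \<Longrightarrow> I = UNIV"
  using ideal_mult_right[of I 1] by auto

lemma ideal_prod_least: "is_ideal K \<Longrightarrow> (\<And>x y. x \<in> I \<Longrightarrow> y \<in> J \<Longrightarrow> x * y \<in> K) \<Longrightarrow> ideal_prod I J \<subseteq> K"
  unfolding ideal_prod_def by blast

lemma exists_maximal:
  assumes "(0::'a::comm_ring_1) \<noteq> 1"
  shows "\<exists>M::'a set. maximal_ideal M"
proof -
  define A where "A = {I::'a set. is_ideal I \<and> 1 \<notin> I}"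
  have "\<forall>C\<in>chains A. \<exists>U\<in>A. \<forall>X\<in>C. X \<subseteq> U"
  proof
    fix C assume C: "C \<in> chains A"
    show "\<exists>U\<in>A. \<forall>X\<in>C. X \<subseteq> U"
    proof (cases "C = {}")
      case True
      have "{0} \<in> A" using assms by (auto simp: A_def is_ideal_def)
      then show ?thesis using True by blast
    next
      case False
      have CA: "C \<subseteq> A" and ch: "\<forall>X\<in>C. \<forall>Y\<in>C. X \<subseteq> Y \<or> Y \<subseteq> X"
        using C unfolding chains_def chain_subset_def by auto
      have "is_ideal (\<Union>C)"
        unfolding is_ideal_def
      proof (intro conjI ballI allI)
        show "0 \<in> \<Union>C" using False CA by (auto simp: A_def is_ideal_def)
      next
        fix x y assume "x \<in> \<Union>C" "y \<in> \<Union>C"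
        then obtain X Y where "X \<in> C" "Y \<in> C" "x \<in> X" "y \<in> Y" by blast
        with ch CA show "x + y \<in> \<Union>C"
          by (metis A_def Union_iff ideal_add mem_Collect_eq subsetD subset_iff)
      next
        fix x r assume "x \<in> \<Union>C"
        then obtain X where "X \<in> C" "x \<in> X" by blast
        with CA show "r * x \<in> \<Union>C" by (auto simp: A_def intro: ideal_mult_left)
      qed
      moreover have "1 \<notin> \<Union>C" using CA by (auto simp: A_def)
      ultimately show ?thesis by (auto simp: A_def)
    qed
  qed
  from Zorn_Lemma2[OF this] obtain M where M: "M \<in> A" "\<forall>X\<in>A. M \<subseteq> X \<longrightarrow> X = M" by blast
  have "maximal_ideal M"
    unfolding maximal_ideal_def
  proof (intro conjI allI impI)
    show "is_ideal M" using M by (auto simp: A_def)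
    show "M \<noteq> UNIV" using M by (auto simp: A_def)
    fix J assume J: "is_ideal J \<and> M \<subseteq> J"
    show "J = M \<or> J = UNIV"
    proof (cases "1 \<in> J")
      case True then show ?thesis using J ideal_one by blast
    next
      case False then show ?thesis using J M by (auto simp: A_def)
    qed
  qed
  then show ?thesis by blast
qed

lemma one_notin_jac:
  assumes "(0::'a::comm_ring_1) \<noteq> 1"
  shows "(1::'a) \<notin> jacobson_radical"
proof
  assume "(1::'a) \<in> jacobson_radical"
  obtain M :: "'a set" where M: "maximal_ideal M" using exists_maximal[OF assms] by blast
  then have "1 \<in> M" using \<open>1 \<in> jacobson_radical\<close> unfolding jacobson_radical_def by blast
  then show False using M ideal_one maximal_is_ideal unfolding maximal_ideal_def by blast
qed


lemma delta_J2:
  fixes \<delta> :: "'a::comm_ring_1 \<Rightarrow> 'a" and J :: "'a set"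
  assumes p: "prime p" and J: "is_ideal J" and pJ: "(of_nat p :: 'a) \<in> J"
    and d: "is_delta_structure p \<delta>"
  shows "\<forall>x \<in> ideal_prod J J. \<delta> x \<in> J"
proof -
  have p1: "p \<ge> 2" using p prime_ge_2_nat by blast
  define S where "S = {x \<in> J. \<delta> x \<in> J}"
  have d0: "\<delta> 0 = 0" and dadd: "\<And>a b. \<delta> (a + b) = \<delta> a + \<delta> b + delta_cross p a b"
    and dmul: "\<And>a b. \<delta> (a * b) = a ^ p * \<delta> b + b ^ p * \<delta> a + of_nat p * \<delta> a * \<delta> b"
    using d unfolding is_delta_structure_def by auto
  have cross: "delta_cross p a b \<in> J" if "a \<in> J" for a b
    unfolding delta_cross_def
    by (rule ideal_neg[OF J], rule ideal_sum[OF J])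
       (auto intro!: ideal_mult_right[OF J, OF ideal_mult_left[OF J, OF ideal_power[OF J that]]])
  have "is_ideal S"
    unfolding is_ideal_def
  proof (intro conjI ballI allI)
    show "0 \<in> S" using d0 J by (auto simp: S_def ideal_zero)
  next
    fix x y assume "x \<in> S" "y \<in> S"
    then show "x + y \<in> S" unfolding S_def
      by (auto simp: dadd intro!: ideal_add[OF J] cross)
  next
    fix x r assume "x \<in> S"
    then have x: "x \<in> J" "\<delta> x \<in> J" by (auto simp: S_def)
    have "r ^ p * \<delta> x \<in> J" by (rule ideal_mult_left[OF J x(2)])
    moreover have "x ^ p * \<delta> r \<in> J" using p1 by (intro ideal_mult_right[OF J] ideal_power[OF J x(1)]) auto
    moreover have "of_nat p * \<delta> r * \<delta> x \<in> J" by (rule ideal_mult_left[OF J x(2)])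
    ultimately show "r * x \<in> S" unfolding S_def using x
      by (auto simp: dmul intro!: ideal_add[OF J] ideal_mult_left[OF J])
  qed
  moreover have "x * y \<in> S" if "x \<in> J" "y \<in> J" for x y
    unfolding S_def using that p1 pJ
    by (auto simp: dmul intro!: ideal_add[OF J] ideal_mult_left[OF J] ideal_mult_right[OF J] ideal_power[OF J])
  ultimately have "ideal_prod J J \<subseteq> S" by (rule ideal_prod_least)
  then show ?thesis by (auto simp: S_def)
qed

lemma delta_p:
  fixes \<delta> :: "'a::comm_ring_1 \<Rightarrow> 'a"
  assumes p: "prime p" and d: "is_delta_structure p \<delta>"
  shows "\<delta> (of_nat p) = 1 - of_nat p ^ (p - 1)"
proof -
  have p1: "p \<ge> 2" using p prime_ge_2_nat by blast
  define e :: "nat \<Rightarrow> int" where "e k = - (\<Sum>i\<in>{1..p-1}. int ((p choose i) div p) * int k ^ i)" for k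
  define c :: "nat \<Rightarrow> int" where "c n = (\<Sum>k<n. e k)" for n
  have d0: "\<delta> 0 = 0" and d1: "\<delta> 1 = 0" and dadd: "\<And>a b. \<delta> (a + b) = \<delta> a + \<delta> b + delta_cross p a b"
    using d unfolding is_delta_structure_def by auto
  have dn: "\<delta> (of_nat n) = of_int (c n)" for n
  proof (induction n)
    case 0 then show ?case by (simp add: d0 c_def)
  next
    case (Suc n)
    have "\<delta> (of_nat (Suc n)) = \<delta> (of_nat n + 1)" by (simp add: add.commute)
    also have "\<dots> = of_int (c n) + delta_cross p (of_nat n) 1" using Suc by (simp add: dadd d1)
    also have "delta_cross p (of_nat n :: 'a) 1 = of_int (e n)"
      unfolding delta_cross_def e_def by simp
    finally show ?case by (simp add: c_def)
  qed
  have pe: "int p * e k = int k ^ p + 1 - (int k + 1) ^ p" for k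
  proof -
    have "int p * e k = - (\<Sum>i\<in>{1..p-1}. int (p choose i) * int k ^ i)"
    proof -
      have "int p * e k = - (\<Sum>i\<in>{1..p-1}. int p * (int ((p choose i) div p) * int k ^ i))"
        unfolding e_def by (simp add: sum_distrib_left)
      also have "(\<Sum>i\<in>{1..p-1}. int p * (int ((p choose i) div p) * int k ^ i))
          = (\<Sum>i\<in>{1..p-1}. int (p choose i) * int k ^ i)"
      proof (rule sum.cong)
        fix i assume i: "i \<in> {1..p-1}"
        have "p dvd (p choose i)" using dvd_choose_prime[OF _ _ _ p, of i] i p1 by auto
        then have "p * ((p choose i) div p) = p choose i" by simp
        then have "int p * int ((p choose i) div p) = int (p choose i)" by (metis of_nat_mult)
        then show "int p * (int ((p choose i) div p) * int k ^ i) = int (p choose i) * int k ^ i"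
          by (metis mult.assoc)
      qed simp
      finally show ?thesis .
    qed
    moreover have "(int k + 1) ^ p = (\<Sum>i\<le>p. int (p choose i) * int k ^ i)"
      using binomial_ring[of "int k" 1 p] by simp
    moreover have "{..p} = insert 0 (insert p {1..p-1})" using p1 by auto
    ultimately show ?thesis using p1 by simp
  qed
  have pc: "int p * c n = int n - int n ^ p" for n
    by (induction n) (use p1 in \<open>auto simp: c_def distrib_left pe add.commute\<close>)
  have "int p * c p = int p * (1 - int p ^ (p - 1))"
    using pc[of p] p1 by (simp add: right_diff_distrib power_eq_if)
  then have "c p = 1 - int p ^ (p - 1)" using p1 by simp
  then show ?thesis using dn[of p] by simp
qed

theorem lemma3p3:
  fixes p :: nat and \<delta> :: "'a::comm_ring_1 \<Rightarrow> 'a"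
  assumes "prime p"
    and "(0::'a) \<noteq> 1"
    and "Zp_algebra p TYPE('a)"
    and "p_zariskian p TYPE('a)"
    and "is_delta_structure p \<delta>"
  shows "(\<forall>x \<in> ideal_prod jacobson_radical jacobson_radical. \<delta> x \<in> (jacobson_radical :: 'a set))
    \<and> (\<forall>d. distinguished \<delta> d \<longrightarrow> d \<notin> ideal_prod jacobson_radical (jacobson_radical :: 'a set))
    \<and> (\<forall>m :: 'a set. {M. maximal_ideal M} = {m} \<longrightarrow>
          (of_nat p :: 'a) \<in> m \<and> (of_nat p :: 'a) \<notin> ideal_prod m m)"
proof -
  have pJ: "(of_nat p :: 'a) \<in> jacobson_radical" using assms(4) by (simp add: p_zariskian_def)
  have P1: "\<forall>x \<in> ideal_prod jacobson_radical jacobson_radical. \<delta> x \<in> (jacobson_radical :: 'a set)"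
    by (rule delta_J2[OF assms(1) jac_ideal pJ assms(5)])
  have P2: "\<forall>d. distinguished \<delta> d \<longrightarrow> d \<notin> ideal_prod jacobson_radical (jacobson_radical :: 'a set)"
  proof (intro allI impI notI)
    fix d assume "distinguished \<delta> d" "d \<in> ideal_prod jacobson_radical (jacobson_radical :: 'a set)"
    then have "\<delta> d \<in> jacobson_radical" "\<delta> d dvd 1" using P1 by (auto simp: distinguished_def)
    then have "(1::'a) \<in> jacobson_radical" using ideal_unit[OF jac_ideal] by blast
    then show False using one_notin_jac[OF assms(2)] by blast
  qed
  have P3: "(of_nat p :: 'a) \<in> m \<and> (of_nat p :: 'a) \<notin> ideal_prod m m"
    if m: "{M. maximal_ideal M} = {m}" for m :: "'a set"
  proof
    have Jm: "jacobson_radical = m" unfolding jacobson_radical_def m by simp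
    have mm: "maximal_ideal m" using m by blast
    then have mi: "is_ideal m" by (rule maximal_is_ideal)
    show "(of_nat p :: 'a) \<in> m" using pJ Jm by simp
    show "(of_nat p :: 'a) \<notin> ideal_prod m m"
    proof
      assume "(of_nat p :: 'a) \<in> ideal_prod m m"
      then have "\<delta> (of_nat p) \<in> m" using P1 Jm by auto
      then have A: "1 - of_nat p ^ (p - 1) \<in> m" using delta_p[OF assms(1) assms(5)] by simp
      have "p \<ge> 2" using assms(1) prime_ge_2_nat by blast
      then have B: "(of_nat p :: 'a) ^ (p - 1) \<in> m"
        using ideal_power[OF mi \<open>of_nat p \<in> m\<close>] by simp
      have "(1 - of_nat p ^ (p - 1)) + of_nat p ^ (p - 1) \<in> m" by (rule ideal_add[OF mi A B])
      then have "(1::'a) \<in> m" by simp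
      then show False using mm ideal_one[OF mi] unfolding maximal_ideal_def by blast
    qed
  qed
  show ?thesis using P1 P2 P3 by blast
qed

end
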